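(* Let $b<1/2$, $c>0$, and let $f$ be a real-valued function on $[1,\infty)$ with $f(x)\le c\,x^b$ for all $x\ge 1$. Then there is a constant $C$ depending only on $c$ and $b$ such that for every integer $N\ge 2$, $$ \sum_{1\le j\le \pi(N)} p_j^{-1/2} f(N/p_j) \le \frac{C\,N^{1/2}}{\log N}, $$ where $p_1=2<p_2<\dots$ is the increasing sequence of all primes and $\pi(N)$ is the number of primes $\le N$. *)

theory Defs
  imports "HOL-Analysis.Analysis" "HOL-Computational_Algebra.Primes"
begin

end

theory Submission
  imports Defs
begin


definition PS :: "nat \<Rightarrow> nat set" where "PS n = {p. prime p \<and> p \<le> n}"

lemma PS_finite[simp]: "finite (PS n)" unfolding PS_def by auto

lemma prod_primes_dvd:
  fixes A :: "nat set"
  assumes "finite A" "\<forall>p\<in>A. prime p \<and> p dvd x"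
  shows "\<Prod>A dvd x"
  using assms
proof (induction A rule: finite_induct)
  case empty then show ?case by simp
next
  case (insert p A)
  have pr: "prime p" "p dvd x" using insert.prems by auto
  have "\<not> p dvd \<Prod>A"
  proof
    assume "p dvd \<Prod>A"
    then obtain q where "q \<in> A" "p dvd q" using prime_dvd_prod_iff[OF insert.hyps(1) pr(1)] by auto
    then have "p = q" using insert.prems primes_dvd_imp_eq pr(1) by blast
    with \<open>q \<in> A\<close> insert.hyps(2) show False by simp
  qed
  then have "coprime p (\<Prod>A)" using pr(1) prime_imp_coprime by blast
  then show ?case using insert divides_mult pr(2) by simp
qed

lemma binom_odd_bound: "(2*m+1) choose m \<le> 4^m"
proof -
  have eq: "(2*m+1) choose m = (2*m+1) choose (m+1)"
    using binomial_symmetric[of m "2*m+1"] by simp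
  have "((2*m+1) choose m) + ((2*m+1) choose (m+1)) = (\<Sum>k\<in>{m,m+1}. (2*m+1) choose k)" by simp
  also have "\<dots> \<le> (\<Sum>k\<le>2*m+1. (2*m+1) choose k)" by (intro sum_mono2) auto
  also have "\<dots> = 2^(2*m+1)" by (rule choose_row_sum)
  also have "\<dots> = 2 * 4^m" by (simp add: power_mult)
  finally show ?thesis using eq by simp
qed

lemma mid_dvd: "\<Prod>{p. prime p \<and> m+1 < p \<and> p \<le> 2*m+1} dvd ((2*m+1) choose m)"
proof (rule prod_primes_dvd, simp, intro ballI conjI)
  fix p assume p: "p \<in> {p. prime p \<and> m+1 < p \<and> p \<le> 2*m+1}"
  then show "prime p" by simp
  have f: "fact m * fact (m+1) * ((2*m+1) choose m) = (fact (2*m+1) :: nat)"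
    using binomial_fact_lemma[of m "2*m+1"] by (simp add: ac_simps)
  have pr: "prime p" and le: "p \<le> 2*m+1" using p by auto
  have "p dvd fact (2*m+1)" using prime_dvd_fact_iff[OF pr] le by blast
  then have "p dvd fact m * fact (m+1) * ((2*m+1) choose m)" using f by simp
  moreover have "\<not> p \<le> m" "\<not> p \<le> m+1" using p by auto
  then have "\<not> p dvd fact m" "\<not> p dvd fact (m+1)" using prime_dvd_fact_iff[OF pr] by blast+
  ultimately show "p dvd ((2*m+1) choose m)" using pr prime_dvd_mult_iff by metis
qed

lemma PS_small: "n \<le> 1 \<Longrightarrow> PS n = {}"
proof -
  assume n: "n \<le> 1"
  have "\<not> (prime p \<and> p \<le> n)" for p :: nat
  proof
    assume "prime p \<and> p \<le> n"
    then have "2 \<le> p" "p \<le> n" using prime_ge_2_nat by auto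
    then show False using n by linarith
  qed
  then show ?thesis unfolding PS_def by blast
qed

lemma PS_two: "PS 2 = {2}"
proof -
  have "p = 2" if "prime p" "p \<le> 2" for p :: nat
    using prime_ge_2_nat[OF that(1)] that(2) by simp
  then show ?thesis unfolding PS_def by auto
qed

lemma odd_case: assumes less: "\<And>y. y < n \<Longrightarrow> \<Prod>(PS y) \<le> 4^y" and n: "n = 2*m+1" and m: "m \<ge> 1"
  shows "\<Prod>(PS n) \<le> 4^n"
proof -
      define Q where "Q = {p. prime p \<and> m+1 < p \<and> p \<le> 2*m+1}"
      have un: "PS n = PS (m+1) \<union> Q"
      proof (rule set_eqI)
        fix p
        have "p \<le> n \<longleftrightarrow> p \<le> m+1 \<or> (m+1 < p \<and> p \<le> 2*m+1)" using n by auto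
        then show "p \<in> PS n \<longleftrightarrow> p \<in> PS (m+1) \<union> Q" unfolding PS_def Q_def by blast
      qed
      have dj: "PS (m+1) \<inter> Q = {}"
      proof (rule equals0I)
        fix p assume "p \<in> PS (m+1) \<inter> Q"
        then have "p \<le> m+1" "m+1 < p" unfolding PS_def Q_def by blast+
        then show False by linarith
      qed
      have fQ: "finite Q" unfolding Q_def by auto
      have "\<Prod>(PS n) = \<Prod>(PS (m+1)) * \<Prod>Q"
        unfolding un by (rule prod.union_disjoint[OF PS_finite fQ dj])
      also have "\<dots> \<le> 4^(m+1) * 4^m"
      proof (rule mult_mono)
        have "m + 1 < n" using n m by simp
        then show "\<Prod>(PS (m+1)) \<le> 4^(m+1)" using less by blast
        have "\<Prod>Q \<le> (2*m+1) choose m"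
          unfolding Q_def by (rule dvd_imp_le[OF mid_dvd]) simp
        then show "\<Prod>Q \<le> 4^m" using binom_odd_bound order_trans by blast
      qed auto
      also have "(4::nat)^(m+1) * 4^m = 4^(m+1+m)" by (rule power_add[symmetric])
      also have "m+1+m = n" using n by simp
      finally show ?thesis .
qed

lemma primorial_bound: "\<Prod>(PS n) \<le> 4^n"
proof (induction n rule: less_induct)
  case (less n)
  show ?case
  proof (cases "n \<le> 1")
    case True
    then show ?thesis by (simp add: PS_small)
  next
    case n1: False
  show ?thesis
  proof (cases "n = 2")
    case True
    then show ?thesis by (simp add: PS_two)
  next
    case n2: False
    show ?thesis
    proof (cases "even n")
      case True
      have "n > 2" using n1 n2 by simp
      then have np: "\<not> prime n" using True prime_odd_nat by auto
      obtain k where k: "n = Suc k" using n1 by (cases n) auto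
      have "PS n = PS k" unfolding PS_def k using np k by (auto simp: le_Suc_eq)
      then have "\<Prod>(PS n) \<le> 4^k" using less[of k] k by simp
      also have "(4::nat)^k \<le> 4^n" using k by (intro power_increasing) auto
      finally show ?thesis .
    next
      case odd: False
      define m where "m = n div 2"
      have n: "n = 2*m+1" unfolding m_def using odd by simp
      have m: "m \<ge> 1" using n1 n by simp
      show ?thesis by (rule odd_case[OF less n m]) 
    qed
  qed
  qed
qed




definition theta :: "nat \<Rightarrow> real" where "theta n = (\<Sum>p\<in>PS n. ln (real p))"

lemma theta_bound: "theta n \<le> 2 * real n"
proof -
  have pos: "\<And>p. p \<in> PS n \<Longrightarrow> real p > 0" unfolding PS_def using prime_gt_0_nat by auto
  have e1: "real (\<Prod>(PS n)) = (\<Prod>p\<in>PS n. real p)" by (rule of_nat_prod)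
  have P: "(\<Prod>p\<in>PS n. real p) > 0" using pos by (intro prod_pos) auto
  have l4: "ln (4::real) = ln 2 + ln 2" using ln_mult[of 2 2] by simp
  have t: "theta n = ln (\<Prod>p\<in>PS n. real p)"
    unfolding theta_def by (rule ln_prod[symmetric]) (use pos in force)+
  have "(\<Prod>p\<in>PS n. real p) \<le> real ((4::nat)^n)"
    unfolding e1[symmetric] of_nat_le_iff by (rule primorial_bound)
  then have "ln (\<Prod>p\<in>PS n. real p) \<le> ln (real ((4::nat)^n))"
    using P by (subst ln_le_cancel_iff) auto
  also have "ln (real ((4::nat)^n)) = real n * ln 4" by (simp add: ln_realpow)
  also have "\<dots> = real n * (ln 2 + ln 2)" using l4 by simp
  also have "\<dots> \<le> real n * 2" using ln_2_less_1 by (intro mult_left_mono) auto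
  finally show ?thesis using t by simp
qed

lemma theta_nonneg: "theta n \<ge> 0"
  unfolding theta_def
proof (intro sum_nonneg)
  fix p assume "p \<in> PS n"
  then have "p \<ge> 1" by (simp add: PS_def prime_ge_Suc_0_nat)
  then show "0 \<le> ln (real p)" by simp
qed

lemma Suc_notin_PS[simp]: "Suc N \<notin> PS N" by (simp add: PS_def)

lemma PS_Suc: "PS (Suc n) = (if prime (Suc n) then insert (Suc n) (PS n) else PS n)"
  unfolding PS_def by (auto simp: le_Suc_eq)

lemma abel:
  fixes g :: "nat \<Rightarrow> real"
  assumes nonneg: "\<And>n. n \<ge> 1 \<Longrightarrow> g n \<ge> 0"
    and anti: "\<And>n. n \<ge> 1 \<Longrightarrow> g (Suc n) \<le> g n"
  shows "(\<Sum>p\<in>PS N. g p * ln (real p)) \<le> 2 * (\<Sum>n\<in>{1..N}. g n)"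
proof -
  have key: "(\<Sum>p\<in>PS N. g p * ln (real p)) + g N * (2 * real N - theta N) \<le> 2 * (\<Sum>n\<in>{1..N}. g n)" for N
  proof (induction N)
    case 0
    then show ?case by (simp add: PS_def theta_def)
  next
    case (Suc N)
    have mono: "g (Suc N) * (2 * real N - theta N) \<le> g N * (2 * real N - theta N)"
    proof (cases "N = 0")
      case True then show ?thesis by (simp add: theta_def PS_def)
    next
      case False
      then show ?thesis using anti[of N] theta_bound[of N] by (intro mult_right_mono) auto
    qed
    have S: "(\<Sum>p\<in>PS (Suc N). g p * ln (real p)) = (\<Sum>p\<in>PS N. g p * ln (real p)) + (if prime (Suc N) then g (Suc N) * ln (real (Suc N)) else 0)"
      by (simp add: PS_Suc)
    have T: "theta (Suc N) = theta N + (if prime (Suc N) then ln (real (Suc N)) else 0)"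
      unfolding theta_def by (simp add: PS_Suc)
    have "(\<Sum>p\<in>PS (Suc N). g p * ln (real p)) + g (Suc N) * (2 * real (Suc N) - theta (Suc N))
        = (\<Sum>p\<in>PS N. g p * ln (real p)) + g (Suc N) * (2 * real N - theta N) + 2 * g (Suc N)"
      unfolding S T by (simp add: algebra_simps)
    also have "\<dots> \<le> 2 * (\<Sum>n\<in>{1..N}. g n) + 2 * g (Suc N)" using Suc.IH mono by linarith
    also have "\<dots> = 2 * (\<Sum>n\<in>{1..Suc N}. g n)" by (simp add: algebra_simps)
    finally show ?case .
  qed
  have "g N * (2 * real N - theta N) \<ge> 0"
  proof (cases "N = 0")
    case False then show ?thesis using nonneg[of N] theta_bound[of N] by auto
  qed (simp add: theta_def PS_def)
  then show ?thesis using key[of N] by linarith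
qed

lemma powr_step:
  fixes r :: real and N :: nat
  assumes "0 < r" "r \<le> 1"
  shows "real N powr r / r + real (Suc N) powr (r - 1) \<le> real (Suc N) powr r / r"
proof (cases "N = 0")
  case True then show ?thesis using assms by (simp add: field_simps)
next
  case False
  define x where "x = real N" define y where "y = real (Suc N)"
  have xy: "0 < x" "0 < y" "y = x + 1" using False by (auto simp: x_def y_def)
  have "(x / y) powr r * 1 powr (1 - r) \<le> r * (x / y) + (1 - r) * 1"
    using assms xy by (intro Youngs_inequality_0) auto
  then have "(x / y) powr r \<le> r * (x / y) + (1 - r)" by simp
  then have "(x / y) powr r * y powr r \<le> (r * (x / y) + (1 - r)) * y powr r"
    by (intro mult_right_mono) auto
  moreover have "(x / y) powr r * y powr r = x powr r" using xy by (simp add: powr_divide)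
  moreover have "(r * (x / y) + (1 - r)) * y powr r = y powr r - r * y powr (r - 1)"
  proof -
    have "y powr (r - 1) = y powr r / y" using xy by (simp add: powr_diff)
    then show ?thesis using xy by (simp add: field_simps)
  qed
  ultimately have h: "x powr r + r * y powr (r - 1) \<le> y powr r" by simp
  have "x powr r / r + y powr (r-1) = (x powr r + r * y powr (r-1)) / r" using assms by (simp add: field_simps)
  also have "\<dots> \<le> y powr r / r" using h assms by (intro divide_right_mono) auto
  finally show ?thesis unfolding x_def y_def .
qed

lemma sum_powr_bound:
  fixes a :: real
  assumes "0 \<le> a" "a < 1"
  shows "(\<Sum>n\<in>{1..N}. real n powr (-a)) \<le> real N powr (1 - a) / (1 - a)"
proof (induction N)
  case 0 then show ?case by simp
next
  case (Suc N)
  have "(\<Sum>n\<in>{1..Suc N}. real n powr (-a)) = (\<Sum>n\<in>{1..N}. real n powr (-a)) + real (Suc N) powr ((1 - a) - 1)"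
    by simp
  also have "\<dots> \<le> real N powr (1 - a) / (1 - a) + real (Suc N) powr ((1 - a) - 1)" using Suc.IH by simp
  also have "\<dots> \<le> real (Suc N) powr (1 - a) / (1 - a)" using assms by (intro powr_step) auto
  finally show ?case .
qed




lemma prime_sum_nonneg_exp:
  fixes a :: real
  assumes a: "0 \<le> a" "a < 1" and N: "N \<ge> 2"
  shows "(\<Sum>p\<in>PS N. real p powr (-a)) \<le> (2/(1-a)^2 + 4/(1-a)) * real N powr (1-a) / ln (real N)"
proof -
  define A where "A = {p\<in>PS N. real p \<le> sqrt (real N)}"
  define B where "B = {p\<in>PS N. \<not> real p \<le> sqrt (real N)}"
  define L where "L = ln (real N)"
  have Npos: "real N \<ge> 2" using N by simp
  have L: "L > 0" unfolding L_def using Npos by simp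
  have fin: "finite A" "finite B" unfolding A_def B_def by auto
  have split: "(\<Sum>p\<in>PS N. real p powr (-a)) = (\<Sum>p\<in>A. real p powr (-a)) + (\<Sum>p\<in>B. real p powr (-a))"
  proof -
    have "PS N = A \<union> B" unfolding A_def B_def by auto
    moreover have "A \<inter> B = {}" unfolding A_def B_def by auto
    ultimately show ?thesis using fin by (simp add: sum.union_disjoint)
  qed
  define M where "M = nat \<lfloor>sqrt (real N)\<rfloor>"
  have AM: "A \<subseteq> {1..M}" unfolding A_def M_def PS_def
    by (auto simp: prime_ge_Suc_0_nat intro!: le_nat_floor)
  have hM: "real M \<le> sqrt (real N)" unfolding M_def by (rule of_nat_floor) simp
  have "(\<Sum>p\<in>A. real p powr (-a)) \<le> (\<Sum>n\<in>{1..M}. real n powr (-a))"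
    using AM by (intro sum_mono2) auto
  also have "\<dots> \<le> real M powr (1 - a) / (1 - a)" using a by (rule sum_powr_bound)
  also have "\<dots> \<le> sqrt (real N) powr (1 - a) / (1 - a)"
    using a hM by (intro divide_right_mono powr_mono2) auto
  also have "sqrt (real N) powr (1 - a) = real N powr ((1-a)/2)"
    by (simp add: powr_half_sqrt[symmetric] powr_powr)
  finally have SA: "(\<Sum>p\<in>A. real p powr (-a)) \<le> real N powr ((1-a)/2) / (1 - a)" .
  have lnb: "L \<le> real N powr ((1-a)/2) / ((1-a)/2)" unfolding L_def
    using a Npos by (intro ln_powr_bound) auto
  have SA': "(\<Sum>p\<in>A. real p powr (-a)) * L \<le> 2/(1-a)^2 * real N powr (1-a)"
  proof -
    have "(\<Sum>p\<in>A. real p powr (-a)) * L \<le> real N powr ((1-a)/2) / (1 - a) * (real N powr ((1-a)/2) / ((1-a)/2))"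
      using SA lnb L a by (intro mult_mono) (auto intro: sum_nonneg)
    also have "\<dots> = 2/(1-a)^2 * (real N powr ((1-a)/2) * real N powr ((1-a)/2))"
      using a by (simp add: field_simps power2_eq_square)
    also have "real N powr ((1-a)/2) * real N powr ((1-a)/2) = real N powr (1-a)"
      by (simp add: powr_add[symmetric])
    finally show ?thesis .
  qed
  have SB: "(\<Sum>p\<in>B. real p powr (-a)) * L \<le> 2 * (\<Sum>p\<in>PS N. real p powr (-a) * ln (real p))"
  proof -
    have "(\<Sum>p\<in>B. real p powr (-a)) * L = (\<Sum>p\<in>B. real p powr (-a) * L)"
      by (simp add: sum_distrib_right)
    also have "\<dots> \<le> (\<Sum>p\<in>B. real p powr (-a) * (2 * ln (real p)))"
    proof (intro sum_mono mult_left_mono)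
      fix p assume p: "p \<in> B"
      then have "sqrt (real N) < real p" unfolding B_def by auto
      moreover have s0: "0 < sqrt (real N)" using Npos by simp
      ultimately have "0 < real p" by linarith
      with s0 \<open>sqrt (real N) < real p\<close> have "ln (sqrt (real N)) < ln (real p)" by simp
      then show "L \<le> 2 * ln (real p)" unfolding L_def using Npos by (simp add: ln_sqrt)
    qed auto
    also have "\<dots> = 2 * (\<Sum>p\<in>B. real p powr (-a) * ln (real p))"
      by (simp add: sum_distrib_left algebra_simps)
    also have "\<dots> \<le> 2 * (\<Sum>p\<in>PS N. real p powr (-a) * ln (real p))"
      unfolding B_def PS_def
      by (intro mult_left_mono sum_mono2) (auto simp: prime_ge_Suc_0_nat)
    finally show ?thesis .
  qed
  have AB: "(\<Sum>p\<in>PS N. real p powr (-a) * ln (real p)) \<le> 2 * (real N powr (1 - a) / (1 - a))"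
  proof -
    have "(\<Sum>p\<in>PS N. real p powr (-a) * ln (real p)) \<le> 2 * (\<Sum>n\<in>{1..N}. real n powr (-a))"
    proof (rule abel)
      fix n :: nat assume "n \<ge> 1"
      then show "real (Suc n) powr (-a) \<le> real n powr (-a)"
        using a by (intro powr_mono2') auto
    qed auto
    also have "\<dots> \<le> 2 * (real N powr (1 - a) / (1 - a))"
      using sum_powr_bound[OF a, of N] by linarith
    finally show ?thesis .
  qed
  have "(\<Sum>p\<in>PS N. real p powr (-a)) * L \<le> (2/(1-a)^2 + 4/(1-a)) * real N powr (1-a)"
    using SA' SB AB unfolding split by (simp add: algebra_simps)
  then show ?thesis using L unfolding L_def by (simp add: pos_le_divide_eq)
qed

lemma prime_sum_bound:
  fixes a :: real
  assumes a: "a < 1"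
  shows "\<exists>K\<ge>0. \<forall>N\<ge>2. (\<Sum>p\<in>PS N. real p powr (-a)) \<le> K * real N powr (1-a) / ln (real N)"
proof (cases "a \<ge> 0")
  case True
  show ?thesis
    by (rule exI[of _ "2/(1-a)^2 + 4/(1-a)"]) (use a True prime_sum_nonneg_exp in auto)
next
  case False
  show ?thesis
  proof (rule exI[of _ 6], intro conjI allI impI)
    fix N :: nat assume N: "N \<ge> 2"
    have L: "ln (real N) > 0" using N by simp
    have "(\<Sum>p\<in>PS N. real p powr (-a)) \<le> (\<Sum>p\<in>PS N. real N powr (-a) * real p powr (-0))"
    proof (intro sum_mono)
      fix p assume p: "p \<in> PS N"
      then have "p > 0" "p \<le> N" by (auto simp: PS_def prime_gt_0_nat)
      then show "real p powr (-a) \<le> real N powr (-a) * real p powr (-0)"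
        using False by (auto intro!: powr_mono2)
    qed
    also have "\<dots> = real N powr (-a) * (\<Sum>p\<in>PS N. real p powr (-0))"
      by (simp add: sum_distrib_left)
    also have "\<dots> \<le> real N powr (-a) * ((2/(1-0)^2 + 4/(1-0)) * real N powr (1-0) / ln (real N))"
      by (intro mult_left_mono prime_sum_nonneg_exp N) auto
    also have "\<dots> = 6 * (real N powr (-a) * real N powr 1) / ln (real N)" by simp
    also have "real N powr (-a) * real N powr 1 = real N powr (1 - a)"
      using powr_add[of "real N" "-a" 1] by simp
    finally show "(\<Sum>p\<in>PS N. real p powr (-a)) \<le> 6 * real N powr (1-a) / ln (real N)" .
  qed simp
qed

theorem lemma2p1:
  fixes b c :: real
  assumes "b < 1/2" and "c > 0"
  shows "\<exists>C::real. \<forall>f::real \<Rightarrow> real.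
           (\<forall>x\<ge>1. f x \<le> c * x powr b) \<longrightarrow>
           (\<forall>N::nat. N \<ge> 2 \<longrightarrow>
              (\<Sum>p\<in>{p::nat. prime p \<and> p \<le> N}. real p powr (-1/2) * f (real N / real p))
                \<le> C * sqrt (real N) / ln (real N))"
proof -
  obtain K where K: "K \<ge> 0" "\<And>N. N \<ge> 2 \<Longrightarrow> (\<Sum>p\<in>PS N. real p powr (-(1/2+b))) \<le> K * real N powr (1-(1/2+b)) / ln (real N)"
    using prime_sum_bound[of "1/2+b"] assms(1) by auto
  show ?thesis
  proof (rule exI[of _ "c * K"], intro allI impI)
    fix f :: "real \<Rightarrow> real" and N :: nat
    assume hf: "\<forall>x\<ge>1. f x \<le> c * x powr b" and N: "N \<ge> 2"
    have L: "ln (real N) > 0" using N by simp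
    have "(\<Sum>p\<in>{p::nat. prime p \<and> p \<le> N}. real p powr (-1/2) * f (real N / real p))
        \<le> (\<Sum>p\<in>PS N. c * real N powr b * real p powr (-(1/2+b)))"
      unfolding PS_def
    proof (intro sum_mono)
      fix p assume p: "p \<in> {p. prime p \<and> p \<le> N}"
      then have pp: "real p > 0" "real p \<le> real N" by (auto simp: prime_gt_0_nat)
      then have "real N / real p \<ge> 1" by simp
      then have "f (real N / real p) \<le> c * (real N / real p) powr b" using hf by blast
      then have "real p powr (-1/2) * f (real N / real p) \<le> real p powr (-1/2) * (c * (real N / real p) powr b)"
        by (intro mult_left_mono) auto
      also have "\<dots> = c * real N powr b * (real p powr (-1/2) / real p powr b)"
        by (simp add: powr_divide)
      also have "real p powr (-1/2) / real p powr b = real p powr (-(1/2+b))"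
        by (simp add: powr_diff[symmetric])
      finally show "real p powr (-1/2) * f (real N / real p) \<le> c * real N powr b * real p powr (-(1/2+b))" .
    qed
    also have "\<dots> = c * real N powr b * (\<Sum>p\<in>PS N. real p powr (-(1/2+b)))"
      by (simp add: sum_distrib_left)
    also have "\<dots> \<le> c * real N powr b * (K * real N powr (1-(1/2+b)) / ln (real N))"
      using K(2)[OF N] assms(2) by (intro mult_left_mono) auto
    also have "\<dots> = c * K * (real N powr b * real N powr (1-(1/2+b))) / ln (real N)"
      by simp
    also have "real N powr b * real N powr (1-(1/2+b)) = sqrt (real N)"
      by (simp add: powr_add[symmetric] powr_half_sqrt)
    finally show "(\<Sum>p\<in>{p::nat. prime p \<and> p \<le> N}. real p powr (-1/2) * f (real N / real p))
                \<le> c * K * sqrt (real N) / ln (real N)" .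
  qed
qed


end
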